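(* For $\lambda>0$ let $\zeta_\lambda(z)=\lambda\frac{z}{z+1}e^{-z}$, and consider its restriction $\zeta_\lambda(x)$ to real $x\neq -1$. Let $\lambda^{*}=(\sqrt{2}+1)e^{\sqrt{2}}$. Then: (i) If $0<\lambda<1$, then $\zeta_\lambda$ has a unique nonzero real fixed point $r_\lambda$, it lies in $(-1,0)$ and is repelling, and the fixed point $0$ is attracting. (ii) If $\lambda=1$, then the fixed point $0$ is rationally indifferent. (iii) If $1<\lambda<\lambda^{*}$, then $\zeta_\lambda$ has a unique nonzero real fixed point $a_\lambda$, it lies in $(0,\sqrt{2})$ and is attracting, and the fixed point $0$ is repelling. (iv) If $\lambda=\lambda^{*}$, then $\sqrt{2}$ is a rationally indifferent fixed point and the fixed point $0$ is repelling. (v) If $\lambda>\lambda^{*}$, then the fixed point $0$ is repelling.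
   Context: A fixed point $x_f$ of $\zeta_\lambda$ is called attracting if $|\zeta_\lambda'(x_f)|<1$, repelling if $|\zeta_\lambda'(x_f)|>1$, and rationally indifferent if $\zeta_\lambda'(x_f)$ is a root of unity (here, $|\zeta_\lambda'(x_f)|=1$ with real multiplier). *)

theory Defs
  imports "HOL-Analysis.Analysis"
begin

definition zeta :: "real \<Rightarrow> real \<Rightarrow> real" where
  "zeta lam x = lam * (x / (x + 1)) * exp (- x)"

definition is_fixed_point :: "(real \<Rightarrow> real) \<Rightarrow> real \<Rightarrow> bool" where
  "is_fixed_point f x \<longleftrightarrow> f x = x"

definition attracting :: "(real \<Rightarrow> real) \<Rightarrow> real \<Rightarrow> bool" where
  "attracting f x \<longleftrightarrow> is_fixed_point f x \<and> \<bar>deriv f x\<bar> < 1"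

definition repelling :: "(real \<Rightarrow> real) \<Rightarrow> real \<Rightarrow> bool" where
  "repelling f x \<longleftrightarrow> is_fixed_point f x \<and> \<bar>deriv f x\<bar> > 1"

definition rationally_indifferent :: "(real \<Rightarrow> real) \<Rightarrow> real \<Rightarrow> bool" where
  "rationally_indifferent f x \<longleftrightarrow> is_fixed_point f x \<and> (\<exists>n::nat. n > 0 \<and> deriv f x ^ n = 1)"

definition lambda_star :: real where
  "lambda_star = (sqrt 2 + 1) * exp (sqrt 2)"

end

theory Submission
  imports Defs
begin

lemma a1: assumes "x \<noteq> 0" "x \<noteq> -1" shows "zeta lam x = x \<longleftrightarrow> lam * exp (-x) = x + 1"
proof -
  have n: "x + 1 \<noteq> 0" using assms by simp
  have "zeta lam x = x \<longleftrightarrow> x * (lam * exp (-x)) = x * (x + 1)"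
    unfolding zeta_def using n by (auto simp: field_simps)
  then show ?thesis using assms(1) by simp
qed
lemma a2: "lam * exp (-x) = x + 1 \<longleftrightarrow> lam = (x+1) * exp (x::real)"
  by (auto simp: exp_minus field_simps)
lemma a3: "0 < (t::real) \<Longrightarrow> t < 1 \<Longrightarrow> 1/t > t"
  by (simp add: field_simps) (smt (verit) mult_less_cancel_left2)
lemma a4: "sqrt 2 + 1 > (1::real)" "exp (sqrt 2) > 1" "(sqrt 2 + 1) * exp (sqrt 2) > 1"
  apply simp apply simp using less_1_mult by (metis one_less_exp_iff real_sqrt_gt_zero zero_less_numeral  less_add_same_cancel2)
lemma a5: "0 < (x::real) \<Longrightarrow> x*x < 2 \<Longrightarrow> 1/(x+1) > x - 1"
proof -
  assume "0 < x" "x*x<2"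
  then have "(x-1)*(x+1) < 1" by (simp add: algebra_simps)
  then show ?thesis using \<open>0<x\<close> by (simp add: field_simps)
qed

definition g :: "real \<Rightarrow> real" where "g x = (x + 1) * exp x"

lemma fp_iff:
  assumes "x \<noteq> 0" "x \<noteq> -1"
  shows "zeta lam x = x \<longleftrightarrow> g x = lam"
  using a1[OF assms] a2 unfolding g_def by auto

lemma g_neg: "x \<le> -1 \<Longrightarrow> g x \<le> 0"
  unfolding g_def by (simp add: mult_nonpos_nonneg)

lemma g_mono: assumes "-1 \<le> a" "a < b" shows "g a < g b"
proof (cases "a + 1 = 0")
  case True then show ?thesis using assms unfolding g_def by simp
next
  case False
  then have "0 < a + 1" using assms by simp
  moreover have "exp a < exp b" using assms by simp
  ultimately have "(a+1) * exp a < (b+1) * exp b"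
    using assms by (intro mult_strict_mono) auto
  then show ?thesis unfolding g_def .
qed

lemma g_inj: assumes "-1 \<le> a" "-1 \<le> b" "g a = g b" shows "a = b"
  using g_mono[of a b] g_mono[of b a] assms by (cases a b rule: linorder_cases) auto

lemma zeta_deriv:
  assumes "x \<noteq> -1"
  shows "deriv (zeta lam) x = lam * exp (-x) * (1/(x+1)^2 - x/(x+1))"
proof -
  have n: "x + 1 \<noteq> 0" using assms by simp
  have "((\<lambda>x. lam * (x / (x + 1)) * exp (- x)) has_real_derivative
     lam * exp (-x) * (1/(x+1)^2 - x/(x+1))) (at x)"
    apply (insert assms)
    apply (rule derivative_eq_intros refl)+
    apply (simp add: add_eq_0_iff)
    apply (rule refl)
    apply (rule refl)
    apply (rule derivative_eq_intros refl)+
    apply (simp add: right_diff_distrib power2_eq_square algebra_simps)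
    done
  then show ?thesis
    unfolding zeta_def[abs_def] by (rule DERIV_imp_deriv)
qed

lemma deriv0: "deriv (zeta lam) 0 = lam"
  using zeta_deriv[of 0 lam] by simp

lemma fix0: "is_fixed_point (zeta lam) 0"
  unfolding is_fixed_point_def zeta_def by simp

lemma deriv_fp:
  assumes "x \<noteq> -1" "x \<noteq> 0" "zeta lam x = x"
  shows "deriv (zeta lam) x = 1/(x+1) - x"
proof -
  have "g x = lam" using fp_iff assms by blast
  then have "lam * exp (-x) = x + 1" unfolding g_def by (simp add: exp_minus field_simps)
  moreover have n: "x + 1 \<noteq> 0" using assms by simp
  moreover have "1 + (x * x + x * 2) \<noteq> 0"
  proof -
    have "1 + (x * x + x * 2) = (x+1)*(x+1)" by (simp add: algebra_simps)
    then show ?thesis using n by simp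
  qed
  ultimately show ?thesis using zeta_deriv[OF assms(1), of lam]
    by (simp add: right_diff_distrib power2_eq_square)
qed

lemma g_cont: "isCont g x" unfolding g_def by (intro continuous_intros)

lemma ls_gt1: "lambda_star > 1"
proof -
  have "sqrt 2 + 1 > 1" by simp
  moreover have "exp (sqrt 2) > 1" by simp
  ultimately show ?thesis unfolding lambda_star_def
    using a4(3) by simp
qed

lemma g_sqrt2: "g (sqrt 2) = lambda_star"
  unfolding g_def lambda_star_def by (simp add: add.commute)

theorem theorem3:
  fixes lam :: real
  assumes "lam > 0"
  shows "(lam < 1 \<longrightarrow>
            (\<exists>!r. r \<noteq> 0 \<and> r \<noteq> -1 \<and> zeta lam r = r)
          \<and> (\<forall>r. r \<noteq> 0 \<and> r \<noteq> -1 \<and> zeta lam r = r \<longrightarrow>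
                 r \<in> {-1<..<0} \<and> repelling (zeta lam) r)
          \<and> attracting (zeta lam) 0)
       \<and> (lam = 1 \<longrightarrow> rationally_indifferent (zeta lam) 0)
       \<and> (1 < lam \<and> lam < lambda_star \<longrightarrow>
            (\<exists>!a. a \<noteq> 0 \<and> a \<noteq> -1 \<and> zeta lam a = a)
          \<and> (\<forall>a. a \<noteq> 0 \<and> a \<noteq> -1 \<and> zeta lam a = a \<longrightarrow>
                 a \<in> {0<..<sqrt 2} \<and> attracting (zeta lam) a)
          \<and> repelling (zeta lam) 0)
       \<and> (lam = lambda_star \<longrightarrow>
            rationally_indifferent (zeta lam) (sqrt 2) \<and> repelling (zeta lam) 0)
       \<and> (lam > lambda_star \<longrightarrow> repelling (zeta lam) 0)"
proof -
  have fpg: "\<And>x. x \<noteq> 0 \<Longrightarrow> x \<noteq> -1 \<Longrightarrow> zeta lam x = x \<Longrightarrow> -1 < x \<and> g x = lam"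
  proof -
    fix x assume h: "x \<noteq> 0" "x \<noteq> -1" "zeta lam x = x"
    then have "g x = lam" using fp_iff by blast
    moreover have "-1 < x" using g_neg[of x] \<open>g x = lam\<close> assms by force
    ultimately show "-1 < x \<and> g x = lam" by simp
  qed
  have uniq: "x = y" if hx: "x \<noteq> 0 \<and> x \<noteq> -1 \<and> zeta lam x = x" and hy: "y \<noteq> 0 \<and> y \<noteq> -1 \<and> zeta lam y = y" for x y
  proof -
    have a: "-1 < x" "g x = lam" using fpg hx by auto
    have b: "-1 < y" "g y = lam" using fpg hy by auto
    show ?thesis using g_inj[of x y] a b by simp
  qed
  have g0: "g 0 = 1" "g (-1) = 0" unfolding g_def by simp_all
  have P1: "lam < 1 \<longrightarrow>
            (\<exists>!r. r \<noteq> 0 \<and> r \<noteq> -1 \<and> zeta lam r = r)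
          \<and> (\<forall>r. r \<noteq> 0 \<and> r \<noteq> -1 \<and> zeta lam r = r \<longrightarrow>
                 r \<in> {-1<..<0} \<and> repelling (zeta lam) r)
          \<and> attracting (zeta lam) 0"
  proof
    assume l1: "lam < 1"
    obtain r where r: "-1 \<le> r" "r \<le> 0" "g r = lam"
    proof -
      have "\<exists>x\<ge>-1. x \<le> 0 \<and> g x = lam"
        by (rule IVT) (use g0 assms l1 g_cont in auto)
      then show ?thesis using that by blast
    qed
    have "r \<noteq> 0" "r \<noteq> -1" using r g0 assms l1 by auto
    then have ex: "r \<noteq> 0 \<and> r \<noteq> -1 \<and> zeta lam r = r" using fp_iff r by blast
    have rest: "\<forall>r. r \<noteq> 0 \<and> r \<noteq> -1 \<and> zeta lam r = r \<longrightarrow>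
                 r \<in> {-1<..<0} \<and> repelling (zeta lam) r"
    proof (intro allI impI)
      fix x assume h: "x \<noteq> 0 \<and> x \<noteq> -1 \<and> zeta lam x = x"
      then have gx: "-1 < x" "g x = lam" using fpg by auto
      have "x < 0" using g_mono[of 0 x] gx g0 l1 h by (cases "x < 0") auto
      define t where "t = x + 1"
      have t: "0 < t" "t < 1" using gx \<open>x<0\<close> t_def by auto
      have "deriv (zeta lam) x = 1/t + 1 - t"
        using deriv_fp[of x lam] h t_def by simp
      moreover have "1/t > t" using t a3 by simp
      ultimately have "\<bar>deriv (zeta lam) x\<bar> > 1" by simp
      then show "x \<in> {-1<..<0} \<and> repelling (zeta lam) x"
        using gx \<open>x<0\<close> h unfolding repelling_def is_fixed_point_def by simp
    qed
    show "(\<exists>!r. r \<noteq> 0 \<and> r \<noteq> -1 \<and> zeta lam r = r)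
          \<and> (\<forall>r. r \<noteq> 0 \<and> r \<noteq> -1 \<and> zeta lam r = r \<longrightarrow>
                 r \<in> {-1<..<0} \<and> repelling (zeta lam) r)
          \<and> attracting (zeta lam) 0"
    proof (intro conjI)
      show "\<exists>!r. r \<noteq> 0 \<and> r \<noteq> -1 \<and> zeta lam r = r"
      proof (rule ex1I[of _ r])
        show "r \<noteq> 0 \<and> r \<noteq> -1 \<and> zeta lam r = r" by (rule ex)
        fix y assume "y \<noteq> 0 \<and> y \<noteq> -1 \<and> zeta lam y = y"
        then show "y = r" using uniq[of y r] ex by blast
      qed
      show "attracting (zeta lam) 0" unfolding attracting_def using fix0 deriv0[of lam] assms l1 by simp
    qed (rule rest)
  qed
  have P2: "lam = 1 \<longrightarrow> rationally_indifferent (zeta lam) 0"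
  proof
    assume "lam = 1"
    then show "rationally_indifferent (zeta lam) 0" unfolding rationally_indifferent_def
      using fix0 deriv0[of lam] by (intro conjI exI[of _ 1]) auto
  qed
  have P3: "1 < lam \<and> lam < lambda_star \<longrightarrow>
            (\<exists>!a. a \<noteq> 0 \<and> a \<noteq> -1 \<and> zeta lam a = a)
          \<and> (\<forall>a. a \<noteq> 0 \<and> a \<noteq> -1 \<and> zeta lam a = a \<longrightarrow>
                 a \<in> {0<..<sqrt 2} \<and> attracting (zeta lam) a)
          \<and> repelling (zeta lam) 0"
  proof
    assume l: "1 < lam \<and> lam < lambda_star"
    obtain r where r: "0 \<le> r" "r \<le> sqrt 2" "g r = lam"
    proof -
      have "\<exists>x\<ge>0. x \<le> sqrt 2 \<and> g x = lam"
        by (rule IVT) (use g0 g_sqrt2 l g_cont in auto)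
      then show ?thesis using that by blast
    qed
    have "r \<noteq> 0" "r \<noteq> -1" using r g0 l by auto
    then have ex: "r \<noteq> 0 \<and> r \<noteq> -1 \<and> zeta lam r = r" using fp_iff r by blast
    have rest: "\<forall>a. a \<noteq> 0 \<and> a \<noteq> -1 \<and> zeta lam a = a \<longrightarrow>
                 a \<in> {0<..<sqrt 2} \<and> attracting (zeta lam) a"
    proof (intro allI impI)
      fix x assume h: "x \<noteq> 0 \<and> x \<noteq> -1 \<and> zeta lam x = x"
      then have gx: "-1 < x" "g x = lam" using fpg by auto
      have "0 < x" using g_mono[of x 0] gx g0 l h by (cases "0 < x") auto
      have "x < sqrt 2"
      proof (rule ccontr)
        assume "\<not> x < sqrt 2"
        then have "sqrt 2 = x \<or> sqrt 2 < x" by auto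
        moreover have "-1 \<le> sqrt 2" using real_sqrt_ge_zero[of 2] by linarith
        ultimately have "g (sqrt 2) \<le> g x" using g_mono[of "sqrt 2" x] by force
        then show False using gx g_sqrt2 l by simp
      qed
      have d: "deriv (zeta lam) x = 1/(x+1) - x"
        using deriv_fp[of x lam] h by simp
      have u: "1/(x+1) < 1" using \<open>0<x\<close> by simp
      have "x*x < 2" using \<open>0<x\<close> \<open>x < sqrt 2\<close>
      proof -
        have "x*x < sqrt 2 * sqrt 2" by (rule mult_strict_mono) (use \<open>0<x\<close> \<open>x < sqrt 2\<close> in auto)
        then show ?thesis by simp
      qed
      then have "1/(x+1) > x - 1" using \<open>0<x\<close> a5 by simp
      then have "-1 < deriv (zeta lam) x" "deriv (zeta lam) x < 1" using u d \<open>0<x\<close> by linarith+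
      then have "\<bar>deriv (zeta lam) x\<bar> < 1" by (simp add: abs_less_iff)
      then show "x \<in> {0<..<sqrt 2} \<and> attracting (zeta lam) x"
        using \<open>0<x\<close> \<open>x < sqrt 2\<close> h unfolding attracting_def is_fixed_point_def by simp
    qed
    show "(\<exists>!a. a \<noteq> 0 \<and> a \<noteq> -1 \<and> zeta lam a = a)
          \<and> (\<forall>a. a \<noteq> 0 \<and> a \<noteq> -1 \<and> zeta lam a = a \<longrightarrow>
                 a \<in> {0<..<sqrt 2} \<and> attracting (zeta lam) a)
          \<and> repelling (zeta lam) 0"
    proof (intro conjI)
      show "\<exists>!r. r \<noteq> 0 \<and> r \<noteq> -1 \<and> zeta lam r = r"
      proof (rule ex1I[of _ r])
        show "r \<noteq> 0 \<and> r \<noteq> -1 \<and> zeta lam r = r" by (rule ex)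
        fix y assume "y \<noteq> 0 \<and> y \<noteq> -1 \<and> zeta lam y = y"
        then show "y = r" using uniq[of y r] ex by blast
      qed
      show "repelling (zeta lam) 0" unfolding repelling_def using fix0 deriv0[of lam] l by simp
    qed (rule rest)
  qed
  have P4: "lam = lambda_star \<longrightarrow>
            rationally_indifferent (zeta lam) (sqrt 2) \<and> repelling (zeta lam) 0"
  proof
    assume l: "lam = lambda_star"
    have s0: "sqrt 2 \<noteq> 0" "sqrt 2 \<noteq> -1" using real_sqrt_ge_zero[of 2] by (simp, linarith)
    have fp: "zeta lam (sqrt 2) = sqrt 2" using fp_iff[OF s0] g_sqrt2 l by simp
    have "deriv (zeta lam) (sqrt 2) = 1/(sqrt 2 + 1) - sqrt 2"
      using deriv_fp[OF s0(2) s0(1) fp] .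
    also have "1/(sqrt 2 + 1) = sqrt 2 - 1"
    proof -
      have "(sqrt 2 - 1) * (sqrt 2 + 1) = 1" by (simp add: algebra_simps)
      moreover have "sqrt 2 + 1 \<noteq> 0" using real_sqrt_ge_zero[of 2] by linarith
      ultimately show ?thesis by (simp add: field_simps)
    qed
    finally have "deriv (zeta lam) (sqrt 2) = -1" by simp
    then have "deriv (zeta lam) (sqrt 2) ^ 2 = 1" by simp
    then show "rationally_indifferent (zeta lam) (sqrt 2) \<and> repelling (zeta lam) 0"
      using fp fix0 deriv0[of lam] l ls_gt1 unfolding rationally_indifferent_def repelling_def is_fixed_point_def
      by (intro conjI exI[of _ 2]) auto
  qed
  have P5: "lam > lambda_star \<longrightarrow> repelling (zeta lam) 0"
    using fix0 deriv0[of lam] ls_gt1 unfolding repelling_def by auto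
  show ?thesis using P1 P2 P3 P4 P5 by blast
qed

end
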